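(* Let $M$ be a smooth manifold, $g$ a Riemannian metric, $b$ a $2$-form and $\alpha$ a $1$-form on $M$. Let $V^+=\{X+gX+bX : X\in TM\}$ and $V^+_{d\alpha}=\{X+gX+bX+\iota_Xd\alpha : X\in TM\}$ be the generalized metrics determined by $(g,b)$ and $(g,b+d\alpha)$ respectively. Then the induced affine connections $\nabla^+$ and $\nabla^{+,d\alpha}$ on $TM$ coincide.
   Context: $E=TM\oplus T^*M$ has sections $X+\xi$, projection $\pi:E\to TM$, and Courant bracket $[X+\xi,Y+\eta]_C=[X,Y]+\mathcal L_X\eta-\mathcal L_Y\xi-\tfrac12 d(\iota_X\eta-\iota_Y\xi)$. For a Riemannian metric $g$ and $2$-form $b$ (viewed as maps $TM\to T^*M$), the generalized metric of $(g,b)$ is $G=\begin{pmatrix}-g^{-1}b & g^{-1}\\ g-bg^{-1}b & bg^{-1}\end{pmatrix}$, with $\pm1$-eigenbundles $V^\pm=\{X\pm gX+bX\}$; put $X^\pm=X\pm gX+bX$ and $e_\pm=\tfrac12(\mathrm{Id}\pm G)e$. The induced affine connection is $\nabla^+_XY=\pi(([X^-,Y^+]_C)_+)$. *)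

theory Defs
  imports "HOL-Analysis.Analysis"
begin

text \<open>Local-coordinate model: the manifold is an open set U of real^'n (a chart domain).
  Vector fields and 1-forms are maps U -> real^'n (components in the coordinate
  (co)frame); bilinear forms (g, b) are matrix-valued maps, with entry $ i $ j = value on
  (e_i, e_j).  Sections of E = TM + T*M are pairs (vector field, 1-form).\<close>

type_synonym 'n vf = "real^'n \<Rightarrow> real^'n"
type_synonym 'n mf = "real^'n \<Rightarrow> real^'n^'n"
type_synonym 'n sec = "'n vf \<times> 'n vf"

definition pd :: "'n::finite \<Rightarrow> (real^'n \<Rightarrow> real) \<Rightarrow> real^'n \<Rightarrow> real" where
  "pd i f x = frechet_derivative f (at x) (axis i 1)"

fun C_k :: "nat \<Rightarrow> (real^'n::finite) set \<Rightarrow> (real^'n \<Rightarrow> real) \<Rightarrow> bool" where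
  "C_k 0 U f = continuous_on U f"
| "C_k (Suc k) U f = ((\<forall>x\<in>U. f differentiable (at x)) \<and> (\<forall>i. C_k k U (pd i f)))"

definition smooth_fun :: "(real^'n::finite) set \<Rightarrow> (real^'n \<Rightarrow> real) \<Rightarrow> bool" where
  "smooth_fun U f = (\<forall>k. C_k k U f)"

definition smooth_vf :: "(real^'n::finite) set \<Rightarrow> 'n vf \<Rightarrow> bool" where
  "smooth_vf U F = (\<forall>k. smooth_fun U (\<lambda>x. F x $ k))"

definition smooth_mf :: "(real^'n::finite) set \<Rightarrow> 'n mf \<Rightarrow> bool" where
  "smooth_mf U A = (\<forall>i j. smooth_fun U (\<lambda>x. A x $ i $ j))"

text \<open>A bilinear form A viewed as a map TM -> T*M: X |-> A(X, -) = iota_X A.\<close>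
definition flat :: "real^'n^'n \<Rightarrow> real^'n \<Rightarrow> real^'n::finite" where
  "flat A X = X v* A"

definition sharp :: "real^'n^'n \<Rightarrow> real^'n \<Rightarrow> real^'n::finite" where
  "sharp A \<xi> = \<xi> v* matrix_inv A"

definition dfun :: "(real^'n \<Rightarrow> real) \<Rightarrow> real^'n \<Rightarrow> real^'n::finite" where
  "dfun f x = (\<chi> j. pd j f x)"

definition dform1 :: "'n::finite vf \<Rightarrow> 'n mf" where
  "dform1 \<alpha> x = (\<chi> i j. pd i (\<lambda>y. \<alpha> y $ j) x - pd j (\<lambda>y. \<alpha> y $ i) x)"

definition lie_bracket :: "'n::finite vf \<Rightarrow> 'n vf \<Rightarrow> 'n vf" where
  "lie_bracket X Y x = (\<chi> k. \<Sum>i\<in>UNIV. X x $ i * pd i (\<lambda>y. Y y $ k) x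
                                      - Y x $ i * pd i (\<lambda>y. X y $ k) x)"

definition lie_deriv :: "'n::finite vf \<Rightarrow> 'n vf \<Rightarrow> 'n vf" where
  "lie_deriv X \<eta> x = (\<chi> j. \<Sum>i\<in>UNIV. X x $ i * pd i (\<lambda>y. \<eta> y $ j) x
                                      + \<eta> x $ i * pd j (\<lambda>y. X y $ i) x)"

definition courant :: "'n::finite sec \<Rightarrow> 'n sec \<Rightarrow> 'n sec" where
  "courant e1 e2 = (case e1 of (X, \<xi>) \<Rightarrow> case e2 of (Y, \<eta>) \<Rightarrow>
     (lie_bracket X Y,
      \<lambda>x. lie_deriv X \<eta> x - lie_deriv Y \<xi> x
           - (1/2) *\<^sub>R dfun (\<lambda>y. X y \<bullet> \<eta> y - Y y \<bullet> \<xi> y) x))"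

text \<open>Generalized metric of (g,b) acting on a fibre element v + xi, matrix
  [[-g^{-1} b, g^{-1}], [g - b g^{-1} b, b g^{-1}]].\<close>
definition gen_metric :: "real^'n^'n \<Rightarrow> real^'n^'n \<Rightarrow> ((real^'n) \<times> (real^'n)) \<Rightarrow> ((real^'n) \<times> (real^'n::finite))" where
  "gen_metric g b e = (case e of (v, \<xi>) \<Rightarrow>
     (- sharp g (flat b v) + sharp g \<xi>,
      flat g v - flat b (sharp g (flat b v)) + flat b (sharp g \<xi>)))"

definition plus_part :: "real^'n^'n \<Rightarrow> real^'n^'n \<Rightarrow> ((real^'n) \<times> (real^'n)) \<Rightarrow> ((real^'n) \<times> (real^'n::finite))" where
  "plus_part g b e = (case e of (v, \<xi>) \<Rightarrow> case gen_metric g b e of (w, \<zeta>) \<Rightarrow>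
     ((1/2) *\<^sub>R (v + w), (1/2) *\<^sub>R (\<xi> + \<zeta>)))"

definition lift_plus :: "'n::finite mf \<Rightarrow> 'n mf \<Rightarrow> 'n vf \<Rightarrow> 'n sec" where
  "lift_plus g b X = (X, \<lambda>x. flat (g x) (X x) + flat (b x) (X x))"

definition lift_minus :: "'n::finite mf \<Rightarrow> 'n mf \<Rightarrow> 'n vf \<Rightarrow> 'n sec" where
  "lift_minus g b X = (X, \<lambda>x. - flat (g x) (X x) + flat (b x) (X x))"

definition nabla_plus :: "'n::finite mf \<Rightarrow> 'n mf \<Rightarrow> 'n vf \<Rightarrow> 'n vf \<Rightarrow> 'n vf" where
  "nabla_plus g b X Y x =
     (let e = courant (lift_minus g b X) (lift_plus g b Y)
      in fst (plus_part (g x) (b x) (fst e x, snd e x)))"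

definition riemannian_metric_on :: "(real^'n::finite) set \<Rightarrow> 'n mf \<Rightarrow> bool" where
  "riemannian_metric_on U g = (smooth_mf U g \<and>
     (\<forall>x\<in>U. transpose (g x) = g x \<and> (\<forall>v. v \<noteq> 0 \<longrightarrow> v \<bullet> (g x *v v) > 0)))"

definition two_form_on :: "(real^'n::finite) set \<Rightarrow> 'n mf \<Rightarrow> bool" where
  "two_form_on U b = (smooth_mf U b \<and> (\<forall>x\<in>U. transpose (b x) = - b x))"

end

theory Submission
  imports Defs
begin

lemma pd_has: "(f has_derivative f') (at x) \<Longrightarrow> pd i f x = f' (axis i 1)"
  unfolding pd_def using frechet_derivative_at by metis

lemma fd_works: "f differentiable at x \<Longrightarrow> (f has_derivative frechet_derivative f (at x)) (at x)"
  using frechet_derivative_works by blast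

lemma pd_add: assumes "f differentiable at x" "g differentiable at x" shows
   "pd i (\<lambda>y. f y + g y) x = pd i f x + pd i g x"
  using pd_has[OF has_derivative_add[OF fd_works[OF assms(1)] fd_works[OF assms(2)]]] by (simp add: pd_def)

lemma pd_diff: assumes "f differentiable at x" "g differentiable at x" shows
   "pd i (\<lambda>y. f y - g y) x = pd i f x - pd i g x"
  using pd_has[OF has_derivative_diff[OF fd_works[OF assms(1)] fd_works[OF assms(2)]]] by (simp add: pd_def)

lemma pd_minus: assumes "f differentiable at x" shows "pd i (\<lambda>y. - f y) x = - pd i f x"
  using pd_has[OF has_derivative_minus[OF fd_works[OF assms(1)]]] by (simp add: pd_def)

lemma pd_mult: assumes "(f::real^'n::finite\<Rightarrow>real) differentiable at x" "g differentiable at x" shows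
   "pd i (\<lambda>y. f y * g y) x = f x * pd i g x + pd i f x * g x"
  using pd_has[OF has_derivative_mult[OF fd_works[OF assms(1)] fd_works[OF assms(2)]]] by (simp add: pd_def)

lemma pd_sum: assumes "\<And>k. k \<in> S \<Longrightarrow> f k differentiable at x" shows
   "pd i (\<lambda>y. \<Sum>k\<in>S. f k y) x = (\<Sum>k\<in>S. pd i (f k) x)"
  using pd_has[OF has_derivative_sum[OF fd_works[OF assms]]] by (simp add: pd_def)

lemma deriv_line:
  fixes f :: "real^'n::finite \<Rightarrow> real"
  assumes "f differentiable at (p + t *\<^sub>R v)"
  shows "((\<lambda>s. f (p + s *\<^sub>R v)) has_real_derivative frechet_derivative f (at (p + t *\<^sub>R v)) v) (at t)"
proof -
  have l: "((\<lambda>s. p + s *\<^sub>R v) has_derivative (\<lambda>s. s *\<^sub>R v)) (at t)"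
    by (auto intro!: derivative_eq_intros)
  have "((\<lambda>s. f (p + s *\<^sub>R v)) has_derivative (\<lambda>s. frechet_derivative f (at (p + t *\<^sub>R v)) (s *\<^sub>R v))) (at t)"
    using diff_chain_at[OF l fd_works[OF assms]] by (simp add: o_def)
  moreover have "linear (frechet_derivative f (at (p + t *\<^sub>R v)))"
    using fd_works[OF assms] has_derivative_linear by blast
  moreover have "(\<lambda>s. s * c) = (*) c" for c :: real by (auto simp: mult.commute)
  ultimately show ?thesis
    unfolding has_field_derivative_def by (simp add: linear_scale)
qed

lemma schwarz_key:
  fixes f :: "real^'n::finite \<Rightarrow> real"
  assumes B: "ball x r \<subseteq> U" and h: "0 < h" "2*h < r"
    and df: "\<forall>y\<in>U. f differentiable at y" and dfi: "\<forall>y\<in>U. pd i f differentiable at y"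
  shows "\<exists>\<sigma> \<tau>. 0<\<sigma> \<and> \<sigma><h \<and> 0<\<tau> \<and> \<tau><h \<and>
     f (x + h*\<^sub>R axis i 1 + h*\<^sub>R axis j 1) - f (x + h*\<^sub>R axis i 1) - f (x + h*\<^sub>R axis j 1) + f x
      = h*h * pd j (pd i f) (x + \<sigma>*\<^sub>R axis i 1 + \<tau>*\<^sub>R axis j 1)"
proof -
  define ei :: "real^'n" where "ei = axis i 1"
  define ej :: "real^'n" where "ej = axis j 1"
  have inU: "x + s*\<^sub>R ei + t*\<^sub>R ej \<in> U" if "\<bar>s\<bar> \<le> h" "\<bar>t\<bar> \<le> h" for s t
  proof -
    have "norm (s*\<^sub>R ei + t*\<^sub>R ej) \<le> norm (s*\<^sub>R ei) + norm (t*\<^sub>R ej)" by (rule norm_triangle_ineq)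
    also have "\<dots> = \<bar>s\<bar> + \<bar>t\<bar>" by (simp add: ei_def ej_def)
    finally have "norm (s*\<^sub>R ei + t*\<^sub>R ej) < r" using that h by linarith
    moreover have "dist x (x + (s*\<^sub>R ei + t*\<^sub>R ej)) = norm (s*\<^sub>R ei + t*\<^sub>R ej)"
      by (metis add_diff_cancel_left' dist_commute dist_norm)
    ultimately have "x + s*\<^sub>R ei + t*\<^sub>R ej \<in> ball x r" by (simp add: add.assoc)
    then show ?thesis using B by blast
  qed
  define u where "u s = f ((x + h*\<^sub>R ej) + s*\<^sub>R ei) - f (x + s*\<^sub>R ei)" for s
  have du: "DERIV u s :> pd i f ((x + h*\<^sub>R ej) + s*\<^sub>R ei) - pd i f (x + s*\<^sub>R ei)"
    if "0 \<le> s" "s \<le> h" for s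
  proof -
    have m1: "(x + h*\<^sub>R ej) + s*\<^sub>R ei \<in> U" using inU[of s h] that h by (simp add: add.assoc add.commute add.left_commute)
    have m2: "x + s*\<^sub>R ei \<in> U" using inU[of s 0] that h by simp
    have d1: "f differentiable at ((x + h*\<^sub>R ej) + s*\<^sub>R axis i 1)" using df m1 by (simp add: ei_def)
    have d2: "f differentiable at (x + s*\<^sub>R axis i 1)" using df m2 by (simp add: ei_def)
    show ?thesis unfolding u_def[abs_def] pd_def ei_def
      by (rule DERIV_diff[OF deriv_line[OF d1] deriv_line[OF d2]])
  qed
  obtain \<sigma> where s: "0 < \<sigma>" "\<sigma> < h"
    and eq1: "u h - u 0 = (h - 0) * (pd i f ((x + h*\<^sub>R ej) + \<sigma>*\<^sub>R ei) - pd i f (x + \<sigma>*\<^sub>R ei))"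
    using MVT2[OF h(1) du] by auto
  define w where "w t = pd i f ((x + \<sigma>*\<^sub>R ei) + t*\<^sub>R ej)" for t
  have dw: "DERIV w t :> pd j (pd i f) ((x + \<sigma>*\<^sub>R ei) + t*\<^sub>R ej)" if "0 \<le> t" "t \<le> h" for t
  proof -
    have m1: "(x + \<sigma>*\<^sub>R ei) + t*\<^sub>R ej \<in> U" using inU[of \<sigma> t] that h s by simp
    have d1: "pd i f differentiable at ((x + \<sigma>*\<^sub>R ei) + t*\<^sub>R axis j 1)" using dfi m1 by (simp add: ej_def)
    show ?thesis unfolding w_def[abs_def] ej_def pd_def[of j]
      by (rule deriv_line[OF d1])
  qed
  obtain \<tau> where t: "0 < \<tau>" "\<tau> < h"
    and eq2: "w h - w 0 = (h - 0) * pd j (pd i f) ((x + \<sigma>*\<^sub>R ei) + \<tau>*\<^sub>R ej)"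
    using MVT2[OF h(1) dw] by auto
  have "f (x + h*\<^sub>R ei + h*\<^sub>R ej) - f (x + h*\<^sub>R ei) - f (x + h*\<^sub>R ej) + f x = u h - u 0"
  proof -
    have e: "(x + h*\<^sub>R ej) + h*\<^sub>R ei = x + h*\<^sub>R ei + h*\<^sub>R ej" by (simp add: add_ac)
    show ?thesis by (simp only: u_def) (simp add: e)
  qed
  also have "\<dots> = h * (w h - w 0)"
  proof -
    have e: "(x + h*\<^sub>R ej) + \<sigma>*\<^sub>R ei = (x + \<sigma>*\<^sub>R ei) + h*\<^sub>R ej" by (simp add: add_ac)
    show ?thesis using eq1 by (simp add: w_def e)
  qed
  also have "\<dots> = h*h * pd j (pd i f) (x + \<sigma>*\<^sub>R ei + \<tau>*\<^sub>R ej)" using eq2 by simp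
  finally show ?thesis using s t unfolding ei_def ej_def by blast
qed

lemma near_pt:
  fixes x :: "real^'n::finite"
  assumes "0 < s" "s < h" "0 < t" "t < h"
  shows "dist (x + s*\<^sub>R axis i 1 + t*\<^sub>R axis j 1) x < 2*h"
proof -
  have "norm (s*\<^sub>R (axis i 1::real^'n) + t*\<^sub>R (axis j 1::real^'n)) \<le> norm (s*\<^sub>R (axis i 1::real^'n)) + norm (t*\<^sub>R (axis j 1::real^'n))"
    by (rule norm_triangle_ineq)
  also have "\<dots> = \<bar>s\<bar> + \<bar>t\<bar>" by simp
  finally have "norm (s*\<^sub>R axis i 1 + t*\<^sub>R (axis j 1::real^'n)) < 2*h" using assms by linarith
  moreover have "dist (x + (s*\<^sub>R axis i 1 + t*\<^sub>R axis j 1)) x = norm (s*\<^sub>R axis i 1 + t*\<^sub>R (axis j 1::real^'n))"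
    by (simp add: dist_norm)
  ultimately show ?thesis by (simp add: add.assoc)
qed

lemma schwarz:
  fixes f :: "real^'n::finite \<Rightarrow> real"
  assumes U: "open U" "x \<in> U" and df: "\<forall>y\<in>U. f differentiable at y"
    and dfi: "\<forall>y\<in>U. pd i f differentiable at y" and dfj: "\<forall>y\<in>U. pd j f differentiable at y"
    and ci: "continuous_on U (pd j (pd i f))" and cj: "continuous_on U (pd i (pd j f))"
  shows "pd j (pd i f) x = pd i (pd j f) x"
proof -
  obtain r where r: "r > 0" "ball x r \<subseteq> U" using U open_contains_ball by blast
  have main: "\<bar>pd j (pd i f) x - pd i (pd j f) x\<bar> < 2*e" if e: "e > 0" for e
  proof -
    obtain d1 where d1: "d1 > 0" "\<forall>y\<in>U. dist y x < d1 \<longrightarrow> dist (pd j (pd i f) y) (pd j (pd i f) x) < e"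
      using ci U(2) e unfolding continuous_on_iff by blast
    obtain d2 where d2: "d2 > 0" "\<forall>y\<in>U. dist y x < d2 \<longrightarrow> dist (pd i (pd j f) y) (pd i (pd j f) x) < e"
      using cj U(2) e unfolding continuous_on_iff by blast
    define h where "h = min (r/3) (min d1 d2 / 3)"
    have h: "0 < h" "2*h < r" "2*h < d1" "2*h < d2" using r d1 d2 by (auto simp: h_def)
    obtain s1 t1 where st1: "0<s1" "s1<h" "0<t1" "t1<h" and
      eq1: "f (x + h*\<^sub>R axis i 1 + h*\<^sub>R axis j 1) - f (x + h*\<^sub>R axis i 1) - f (x + h*\<^sub>R axis j 1) + f x
      = h*h * pd j (pd i f) (x + s1*\<^sub>R axis i 1 + t1*\<^sub>R axis j 1)"
      using schwarz_key[OF r(2) h(1,2) df dfi] by blast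
    obtain s2 t2 where st2: "0<s2" "s2<h" "0<t2" "t2<h" and
      eq2: "f (x + h*\<^sub>R axis j 1 + h*\<^sub>R axis i 1) - f (x + h*\<^sub>R axis j 1) - f (x + h*\<^sub>R axis i 1) + f x
      = h*h * pd i (pd j f) (x + s2*\<^sub>R axis j 1 + t2*\<^sub>R axis i 1)"
      using schwarz_key[OF r(2) h(1,2) df dfj] by blast
    have ee: "x + h*\<^sub>R axis j 1 + h*\<^sub>R axis i 1 = x + h*\<^sub>R axis i 1 + h*\<^sub>R (axis j 1 :: real^'n)"
      by (simp add: add_ac)
    have "h*h * pd j (pd i f) (x + s1*\<^sub>R axis i 1 + t1*\<^sub>R axis j 1)
        = h*h * pd i (pd j f) (x + s2*\<^sub>R axis j 1 + t2*\<^sub>R axis i 1)"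
      using eq1 eq2[unfolded ee] by linarith
    then have E: "pd j (pd i f) (x + s1*\<^sub>R axis i 1 + t1*\<^sub>R axis j 1)
        = pd i (pd j f) (x + s2*\<^sub>R axis j 1 + t2*\<^sub>R axis i 1)" using h(1) by simp
    have n1: "dist (x + s1*\<^sub>R axis i 1 + t1*\<^sub>R axis j 1) x < 2*h" by (rule near_pt[OF st1])
    have n2: "dist (x + s2*\<^sub>R axis j 1 + t2*\<^sub>R axis i 1) x < 2*h" by (rule near_pt[OF st2])
    have u1: "x + s1*\<^sub>R axis i 1 + t1*\<^sub>R axis j 1 \<in> U" using n1 h r(2) by (auto simp: dist_commute)
    have u2: "x + s2*\<^sub>R axis j 1 + t2*\<^sub>R axis i 1 \<in> U" using n2 h r(2) by (auto simp: dist_commute)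
    have a1: "dist (pd j (pd i f) (x + s1*\<^sub>R axis i 1 + t1*\<^sub>R axis j 1)) (pd j (pd i f) x) < e"
      using d1(2) u1 n1 h(3) by simp
    have a2: "dist (pd i (pd j f) (x + s2*\<^sub>R axis j 1 + t2*\<^sub>R axis i 1)) (pd i (pd j f) x) < e"
      using d2(2) u2 n2 h(4) by simp
    show ?thesis using a1 a2 E by (simp add: dist_real_def)
  qed
  show ?thesis
  proof (rule ccontr)
    assume "pd j (pd i f) x \<noteq> pd i (pd j f) x"
    then have "\<bar>pd j (pd i f) x - pd i (pd j f) x\<bar> > 0" by simp
    moreover have "\<bar>pd j (pd i f) x - pd i (pd j f) x\<bar> < 2 * (\<bar>pd j (pd i f) x - pd i (pd j f) x\<bar> / 4)"
      by (rule main) (use calculation in simp)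
    ultimately show False by (simp add: field_simps)
  qed
qed

lemma sum_antisym_zero:
  fixes F :: "'a \<Rightarrow> 'a \<Rightarrow> real"
  assumes "\<And>i k. F i k + F k i = 0"
  shows "(\<Sum>i\<in>S. \<Sum>k\<in>S. F i k) = 0"
proof -
  have "(\<Sum>i\<in>S. \<Sum>k\<in>S. F i k) = (\<Sum>i\<in>S. \<Sum>k\<in>S. F k i)" by (rule sum.swap)
  then have "2 * (\<Sum>i\<in>S. \<Sum>k\<in>S. F i k) = (\<Sum>i\<in>S. \<Sum>k\<in>S. F i k + F k i)"
    by (simp add: sum.distrib)
  also have "\<dots> = 0" using assms by simp
  finally show ?thesis by simp
qed

lemma core:
  fixes X Y :: "'n::finite vf" and B :: "'n mf"
  assumes dX: "\<And>i. (\<lambda>y. X y $ i) differentiable at x" and dY: "\<And>i. (\<lambda>y. Y y $ i) differentiable at x"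
    and dB: "\<And>k j. (\<lambda>y. B y $ k $ j) differentiable at x"
    and anti: "\<And>k j y. B y $ k $ j = - B y $ j $ k"
    and cyc: "\<And>i k j. pd i (\<lambda>y. B y $ k $ j) x + pd k (\<lambda>y. B y $ j $ i) x + pd j (\<lambda>y. B y $ i $ k) x = 0"
  shows "lie_deriv X (\<lambda>y. flat (B y) (Y y)) x - lie_deriv Y (\<lambda>y. flat (B y) (X y)) x
     - (1/2) *\<^sub>R dfun (\<lambda>y. X y \<bullet> flat (B y) (Y y) - Y y \<bullet> flat (B y) (X y)) x
     = flat (B x) (lie_bracket X Y x)"
proof -
  define xv where "xv i = X x $ i" for i
  define yv where "yv i = Y x $ i" for i
  define Bm where "Bm k j = B x $ k $ j" for k j
  define dXv where "dXv i p = pd p (\<lambda>y. X y $ i) x" for i p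
  define dYv where "dYv i p = pd p (\<lambda>y. Y y $ i) x" for i p
  define dBv where "dBv p k j = pd p (\<lambda>y. B y $ k $ j) x" for p k j
  have P1: "pd i (\<lambda>y. \<Sum>k\<in>UNIV. Y y $ k * B y $ k $ j) x = (\<Sum>k\<in>UNIV. yv k * dBv i k j + dYv k i * Bm k j)"
    for i j
    by (subst pd_sum) (auto simp: pd_mult dY dB yv_def dBv_def dYv_def Bm_def)
  have P1': "pd i (\<lambda>y. \<Sum>k\<in>UNIV. X y $ k * B y $ k $ j) x = (\<Sum>k\<in>UNIV. xv k * dBv i k j + dXv k i * Bm k j)"
    for i j
    by (subst pd_sum) (auto simp: pd_mult dX dB xv_def dBv_def dXv_def Bm_def)
  have dS: "(\<lambda>y. \<Sum>k\<in>UNIV. Y y $ k * B y $ k $ j) differentiable at x" for j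
    using dY dB by (auto intro!: differentiable_sum)
  have dS': "(\<lambda>y. \<Sum>k\<in>UNIV. X y $ k * B y $ k $ j) differentiable at x" for j
    using dX dB by (auto intro!: differentiable_sum)
  have fl: "flat (B y) (Z y) $ j = (\<Sum>k\<in>UNIV. Z y $ k * B y $ k $ j)" for y j and Z :: "'n vf"
    by (simp add: flat_def vector_matrix_mult_def)
  have Q1: "pd i (\<lambda>y. flat (B y) (Y y) $ j) x = (\<Sum>k\<in>UNIV. yv k * dBv i k j + dYv k i * Bm k j)" for i j
    unfolding fl by (rule P1)
  have Q1': "pd i (\<lambda>y. flat (B y) (X y) $ j) x = (\<Sum>k\<in>UNIV. xv k * dBv i k j + dXv k i * Bm k j)" for i j
    unfolding fl by (rule P1')
  have inn: "Z y \<bullet> flat (B y) (W y) = (\<Sum>i\<in>UNIV. Z y $ i * (\<Sum>k\<in>UNIV. W y $ k * B y $ k $ i))"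
    for y and Z W :: "'n vf"
    by (simp add: fl inner_vec_def)
  have d1: "(\<lambda>y. \<Sum>i\<in>UNIV. X y $ i * (\<Sum>k\<in>UNIV. Y y $ k * B y $ k $ i)) differentiable at x"
    using dX dS by (auto intro!: differentiable_sum)
  have d2: "(\<lambda>y. \<Sum>i\<in>UNIV. Y y $ i * (\<Sum>k\<in>UNIV. X y $ k * B y $ k $ i)) differentiable at x"
    using dY dS' by (auto intro!: differentiable_sum)
  have P2: "pd j (\<lambda>y. X y \<bullet> flat (B y) (Y y) - Y y \<bullet> flat (B y) (X y)) x
     = (\<Sum>i\<in>UNIV. xv i * (\<Sum>k\<in>UNIV. yv k * dBv j k i + dYv k j * Bm k i) + dXv i j * (\<Sum>k\<in>UNIV. yv k * Bm k i))
     - (\<Sum>i\<in>UNIV. yv i * (\<Sum>k\<in>UNIV. xv k * dBv j k i + dXv k j * Bm k i) + dYv i j * (\<Sum>k\<in>UNIV. xv k * Bm k i))"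
    for j
    unfolding inn
    apply (subst pd_diff[OF d1 d2])
    apply (subst pd_sum, use dX dS in simp)
    apply (subst pd_sum, use dY dS' in simp)
    apply (simp add: pd_mult dX dY dS dS' P1 P1' xv_def yv_def dXv_def dYv_def Bm_def)
    done
  define F where "F j i k =
      xv i * (yv k * dBv i k j + dYv k i * Bm k j) + yv k * Bm k i * dXv i j
    - (yv i * (xv k * dBv i k j + dXv k i * Bm k j) + xv k * Bm k i * dYv i j)
    - 1/2 * ((xv i * (yv k * dBv j k i + dYv k j * Bm k i) + dXv i j * (yv k * Bm k i))
            - (yv i * (xv k * dBv j k i + dXv k j * Bm k i) + dYv i j * (xv k * Bm k i)))
    - (xv i * dYv k i - yv i * dXv k i) * Bm k j" for j i k
  show ?thesis
  proof (subst vec_eq_iff, intro allI)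
    fix j
    let ?L = "lie_deriv X (\<lambda>y. flat (B y) (Y y)) x - lie_deriv Y (\<lambda>y. flat (B y) (X y)) x
     - (1/2) *\<^sub>R dfun (\<lambda>y. X y \<bullet> flat (B y) (Y y) - Y y \<bullet> flat (B y) (X y)) x"
    have L: "?L $ j = (\<Sum>i\<in>UNIV. xv i * (\<Sum>k\<in>UNIV. yv k * dBv i k j + dYv k i * Bm k j) + (\<Sum>k\<in>UNIV. yv k * Bm k i) * dXv i j)
       - (\<Sum>i\<in>UNIV. yv i * (\<Sum>k\<in>UNIV. xv k * dBv i k j + dXv k i * Bm k j) + (\<Sum>k\<in>UNIV. xv k * Bm k i) * dYv i j)
       - 1/2 * ((\<Sum>i\<in>UNIV. xv i * (\<Sum>k\<in>UNIV. yv k * dBv j k i + dYv k j * Bm k i) + dXv i j * (\<Sum>k\<in>UNIV. yv k * Bm k i))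
     - (\<Sum>i\<in>UNIV. yv i * (\<Sum>k\<in>UNIV. xv k * dBv j k i + dXv k j * Bm k i) + dYv i j * (\<Sum>k\<in>UNIV. xv k * Bm k i)))"
      by (simp only: lie_deriv_def dfun_def vec_lambda_beta vector_minus_component vector_scaleR_component Q1 Q1' P2)
         (use P2 in \<open>simp add: fl xv_def yv_def dXv_def dYv_def Bm_def\<close>)
    have "flat (B x) (lie_bracket X Y x) $ j = (\<Sum>k\<in>UNIV. (\<Sum>i\<in>UNIV. xv i * dYv k i - yv i * dXv k i) * Bm k j)"
      by (simp add: flat_def vector_matrix_mult_def lie_bracket_def xv_def yv_def dXv_def dYv_def Bm_def)
    also have "\<dots> = (\<Sum>k\<in>UNIV. \<Sum>i\<in>UNIV. (xv i * dYv k i - yv i * dXv k i) * Bm k j)"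
      by (simp add: sum_distrib_right)
    also have "\<dots> = (\<Sum>i\<in>UNIV. \<Sum>k\<in>UNIV. (xv i * dYv k i - yv i * dXv k i) * Bm k j)"
      by (rule sum.swap)
    finally have R: "flat (B x) (lie_bracket X Y x) $ j = (\<Sum>i\<in>UNIV. \<Sum>k\<in>UNIV. (xv i * dYv k i - yv i * dXv k i) * Bm k j)" .
    have LR: "?L $ j - flat (B x) (lie_bracket X Y x) $ j = (\<Sum>i\<in>UNIV. \<Sum>k\<in>UNIV. F j i k)"
      unfolding L R F_def
      by (simp add: sum_distrib_left sum_distrib_right sum.distrib sum_subtractf algebra_simps)
    have "F j i k + F j k i = 0" for i k
    proof -
      have a1: "Bm i k = - Bm k i" unfolding Bm_def by (rule anti)
      have adB: "dBv p a c = - dBv p c a" for p a c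
      proof -
        have "(\<lambda>y. B y $ a $ c) = (\<lambda>y. - B y $ c $ a)" by (rule ext) (rule anti)
        then show ?thesis unfolding dBv_def using pd_minus[OF dB[of c a]] by simp
      qed
      have a2: "dBv j i k = - dBv j k i" by (rule adB)
      have a3: "dBv k j i = - dBv k i j" by (rule adB)
      have c: "dBv i k j = dBv k i j + dBv j k i"
        using cyc[of i k j] a2 a3 unfolding dBv_def by linarith
      show ?thesis unfolding F_def by (simp add: a1 a2 a3 c algebra_simps)
    qed
    then have "(\<Sum>i\<in>UNIV. \<Sum>k\<in>UNIV. F j i k) = 0" by (rule sum_antisym_zero)
    then show "?L $ j = flat (B x) (lie_bracket X Y x) $ j" using LR by simp
  qed
qed

definition vd :: "'n::finite vf \<Rightarrow> real^'n \<Rightarrow> bool" where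
  "vd \<eta> x = (\<forall>i. (\<lambda>y. \<eta> y $ i) differentiable at x)"

lemma vd_add: "vd \<eta> x \<Longrightarrow> vd \<zeta> x \<Longrightarrow> vd (\<lambda>y. \<eta> y + \<zeta> y) x"
  unfolding vd_def by simp

lemma vd_minus: "vd \<eta> x \<Longrightarrow> vd (\<lambda>y. - \<eta> y) x"
  unfolding vd_def by simp

lemma vd_flat:
  assumes "\<And>k j. (\<lambda>y. A y $ k $ j) differentiable at x" "vd Z x"
  shows "vd (\<lambda>y. flat (A y) (Z y)) x"
  using assms unfolding vd_def flat_def vector_matrix_mult_def
  by (auto intro!: differentiable_sum)

lemma vd_inner:
  assumes "vd Z x" "vd W x"
  shows "(\<lambda>y. Z y \<bullet> W y) differentiable at x"
  using assms unfolding vd_def inner_vec_def inner_real_def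
  by (auto intro!: differentiable_sum)

lemma flat_add: "flat (A + C) v = flat A v + flat C v"
  by (simp add: flat_def vec_eq_iff vector_matrix_mult_def sum.distrib distrib_left)

lemma sharp_add: "sharp A (a + c) = sharp A a + sharp A c"
  by (simp add: sharp_def vec_eq_iff vector_matrix_mult_def sum.distrib distrib_right)

lemma lie_deriv_add:
  assumes "vd \<eta> x" "vd \<zeta> x"
  shows "lie_deriv X (\<lambda>y. \<eta> y + \<zeta> y) x = lie_deriv X \<eta> x + lie_deriv X \<zeta> x"
  using assms unfolding vd_def
  by (simp add: vec_eq_iff lie_deriv_def pd_add sum.distrib[symmetric] algebra_simps)

lemma dfun_add:
  assumes "f differentiable at x" "g differentiable at x"
  shows "dfun (\<lambda>y. f y + g y) x = dfun f x + dfun g x"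
  using assms by (simp add: vec_eq_iff dfun_def pd_add)

lemma smooth_diff: "smooth_fun U f \<Longrightarrow> y \<in> U \<Longrightarrow> f differentiable at y"
  unfolding smooth_fun_def by (metis C_k.simps(2))

lemma smooth_pd: "smooth_fun U f \<Longrightarrow> smooth_fun U (pd i f)"
  unfolding smooth_fun_def by (metis C_k.simps(2))

lemma smooth_cont: "smooth_fun U f \<Longrightarrow> continuous_on U f"
  unfolding smooth_fun_def by (metis C_k.simps(1))

lemma smooth_schwarz:
  assumes "open U" "x \<in> U" "smooth_fun U f"
  shows "pd j (pd i f) x = pd i (pd j f) x"
  by (rule schwarz[OF assms(1,2)])
     (use assms smooth_diff smooth_pd smooth_cont in blast)+

theorem proposition5p2p2:
  fixes U :: "(real^'n::finite) set"
    and g b :: "'n mf" and \<alpha> X Y :: "'n vf"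
  assumes "open U"
    and "riemannian_metric_on U g"
    and "two_form_on U b"
    and "smooth_vf U \<alpha>"
    and "smooth_vf U X" and "smooth_vf U Y"
    and "x \<in> U"
  shows "nabla_plus g (\<lambda>y. b y + dform1 \<alpha> y) X Y x = nabla_plus g b X Y x"
proof -
  note U = assms(1,7)
  define B where "B = dform1 \<alpha>"
  have Bc: "B y $ k $ j = pd k (\<lambda>z. \<alpha> z $ j) y - pd j (\<lambda>z. \<alpha> z $ k) y" for y k j
    by (simp add: B_def dform1_def)
  have sa: "smooth_fun U (\<lambda>z. \<alpha> z $ j)" for j using assms(4) by (simp add: smooth_vf_def)
  have vX: "vd X x" using assms(5) U smooth_diff unfolding smooth_vf_def vd_def by blast
  have vY: "vd Y x" using assms(6) U smooth_diff unfolding smooth_vf_def vd_def by blast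
  have dg: "(\<lambda>y. g y $ k $ j) differentiable at x" for k j
    using assms(2) U smooth_diff unfolding riemannian_metric_on_def smooth_mf_def by blast
  have db: "(\<lambda>y. b y $ k $ j) differentiable at x" for k j
    using assms(3) U smooth_diff unfolding two_form_on_def smooth_mf_def by blast
  have dB: "(\<lambda>y. B y $ k $ j) differentiable at x" for k j
    unfolding Bc using sa U smooth_diff smooth_pd by (intro differentiable_diff) blast+
  have anti: "B y $ k $ j = - B y $ j $ k" for k j y unfolding Bc by simp
  have cyc: "pd i (\<lambda>y. B y $ k $ j) x + pd k (\<lambda>y. B y $ j $ i) x + pd j (\<lambda>y. B y $ i $ k) x = 0" for i k j
  proof -
    have dd: "pd p (\<lambda>z. \<alpha> z $ q) differentiable at x" for p q
      using sa U smooth_diff smooth_pd by blast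
    have sw: "pd p (pd q (\<lambda>z. \<alpha> z $ r)) x = pd q (pd p (\<lambda>z. \<alpha> z $ r)) x" for p q r
      using smooth_schwarz[OF U sa] by blast
    show ?thesis unfolding Bc
      by (simp add: pd_diff[OF dd dd] sw[of i k j] sw[of k j i] sw[of j i k])
  qed
  have vxi: "vd (\<lambda>y. - flat (g y) (X y) + flat (b y) (X y)) x"
    by (intro vd_add vd_minus vd_flat dg db vX)
  have veta: "vd (\<lambda>y. flat (g y) (Y y) + flat (b y) (Y y)) x"
    by (intro vd_add vd_minus vd_flat dg db vY)
  have vzX: "vd (\<lambda>y. flat (B y) (X y)) x" by (intro vd_flat dB vX)
  have vzY: "vd (\<lambda>y. flat (B y) (Y y)) x" by (intro vd_flat dB vY)
  have lm: "lift_minus g (\<lambda>y. b y + B y) X = (X, \<lambda>y. (- flat (g y) (X y) + flat (b y) (X y)) + flat (B y) (X y))"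
    by (simp add: lift_minus_def flat_add algebra_simps)
  have lp: "lift_plus g (\<lambda>y. b y + B y) Y = (Y, \<lambda>y. (flat (g y) (Y y) + flat (b y) (Y y)) + flat (B y) (Y y))"
    by (simp add: lift_plus_def flat_add add.assoc)
  have inner_split: "(\<lambda>y. X y \<bullet> ((flat (g y) (Y y) + flat (b y) (Y y)) + flat (B y) (Y y))
        - Y y \<bullet> ((- flat (g y) (X y) + flat (b y) (X y)) + flat (B y) (X y)))
      = (\<lambda>y. (X y \<bullet> (flat (g y) (Y y) + flat (b y) (Y y)) - Y y \<bullet> (- flat (g y) (X y) + flat (b y) (X y)))
          + (X y \<bullet> flat (B y) (Y y) - Y y \<bullet> flat (B y) (X y)))"
    by (simp add: inner_add_right algebra_simps)
  have di1: "(\<lambda>y. X y \<bullet> (flat (g y) (Y y) + flat (b y) (Y y)) - Y y \<bullet> (- flat (g y) (X y) + flat (b y) (X y))) differentiable at x"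
    by (intro differentiable_diff vd_inner vX vY vxi veta)
  have di2: "(\<lambda>y. X y \<bullet> flat (B y) (Y y) - Y y \<bullet> flat (B y) (X y)) differentiable at x"
    by (intro differentiable_diff vd_inner vX vY vzX vzY)
  define e where "e = courant (lift_minus g b X) (lift_plus g b Y)"
  define e' where "e' = courant (lift_minus g (\<lambda>y. b y + B y) X) (lift_plus g (\<lambda>y. b y + B y) Y)"
  have fe: "fst e' x = fst e x" by (simp add: e_def e'_def courant_def lift_minus_def lift_plus_def)
  have se: "snd e' x = snd e x + flat (B x) (fst e x)"
  proof -
    have "snd e' x = snd e x + (lie_deriv X (\<lambda>y. flat (B y) (Y y)) x - lie_deriv Y (\<lambda>y. flat (B y) (X y)) x
     - (1/2) *\<^sub>R dfun (\<lambda>y. X y \<bullet> flat (B y) (Y y) - Y y \<bullet> flat (B y) (X y)) x)"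
      unfolding e'_def lm lp courant_def prod.case snd_conv
      unfolding inner_split lie_deriv_add[OF veta vzY] lie_deriv_add[OF vxi vzX] dfun_add[OF di1 di2]
      unfolding e_def courant_def lift_minus_def lift_plus_def prod.case snd_conv
      by (simp add: algebra_simps)
    also have "\<dots> = snd e x + flat (B x) (lie_bracket X Y x)"
      using core[OF _ _ dB anti cyc] vX vY unfolding vd_def by simp
    finally show ?thesis by (simp add: e_def courant_def lift_minus_def lift_plus_def)
  qed
  show ?thesis
    unfolding B_def[symmetric] nabla_plus_def Let_def e_def[symmetric] e'_def[symmetric]
    by (simp add: fe se plus_part_def gen_metric_def flat_add sharp_add)
qed

end
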